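(* Let $n\ge 3$ and let $W_n$ be the web graph. Then its $b$-chromatic number satisfies $$\varphi(W_n)=\begin{cases}4 & \text{if } n=3,4,\\ 5 & \text{if } n\ge 5.\end{cases}$$
   Context: The web graph $W_n$ is obtained from the prism graph $C_n\Box P_2$ (two $n$-cycles $v_1\dots v_n$ and $u_1\dots u_n$ with $u_i$ adjacent to $v_i$ for each $i$) by attaching one pendant vertex to each vertex of one of the two cycles (the outer cycle $u_1\dots u_n$). A $b$-colouring of a graph $G$ with $k$ colours is a proper colouring $c:V(G)\to\{1,\dots,k\}$ such that for every colour $i$ there is a vertex of colour $i$ adjacent to a vertex of every colour $j\ne i$, $1\le j\le k$. The $b$-chromatic number $\varphi(G)$ is the maximum $k$ for which $G$ has a $b$-colouring with $k$ colours. *)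

theory Defs
  imports Main
begin

definition proper_colouring :: "'a set \<Rightarrow> ('a \<Rightarrow> 'a \<Rightarrow> bool) \<Rightarrow> nat \<Rightarrow> ('a \<Rightarrow> nat) \<Rightarrow> bool" where
  "proper_colouring V E k c \<longleftrightarrow>
     (\<forall>x\<in>V. c x \<in> {1..k}) \<and> (\<forall>x\<in>V. \<forall>y\<in>V. E x y \<longrightarrow> c x \<noteq> c y)"

definition b_colouring :: "'a set \<Rightarrow> ('a \<Rightarrow> 'a \<Rightarrow> bool) \<Rightarrow> nat \<Rightarrow> ('a \<Rightarrow> nat) \<Rightarrow> bool" where
  "b_colouring V E k c \<longleftrightarrow> proper_colouring V E k c \<and>
     (\<forall>i\<in>{1..k}. \<exists>x\<in>V. c x = i \<and>
        (\<forall>j\<in>{1..k}. j \<noteq> i \<longrightarrow> (\<exists>y\<in>V. E x y \<and> c y = j)))"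

definition b_chromatic_number :: "'a set \<Rightarrow> ('a \<Rightarrow> 'a \<Rightarrow> bool) \<Rightarrow> nat" where
  "b_chromatic_number V E = (GREATEST k. \<exists>c. b_colouring V E k c)"

(* Web graph W_n. Vertices (l, i) with i < n:
   l = 0 : inner cycle v_{i+1};  l = 1 : outer cycle u_{i+1};  l = 2 : pendant vertex at u_{i+1}. *)
definition web_vertices :: "nat \<Rightarrow> (nat \<times> nat) set" where
  "web_vertices n = {0,1,2} \<times> {..<n}"

definition web_adj :: "nat \<Rightarrow> nat \<times> nat \<Rightarrow> nat \<times> nat \<Rightarrow> bool" where
  "web_adj n x y \<longleftrightarrow> x \<in> web_vertices n \<and> y \<in> web_vertices n \<and>
     ((fst x = fst y \<and> fst x \<in> {0,1} \<and>
        (snd y = Suc (snd x) mod n \<or> snd x = Suc (snd y) mod n))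
    \<or> (snd x = snd y \<and> {fst x, fst y} = {0,1})
    \<or> (snd x = snd y \<and> {fst x, fst y} = {1,2}))"

end

theory Submission
  imports Defs
begin

definition acol :: "nat \<Rightarrow> nat \<Rightarrow> nat" where
  "acol n i = (if i < 5 then i + 1 else 3 + (i + 1) mod 2)"
definition bcol :: "nat \<Rightarrow> nat \<Rightarrow> nat" where
  "bcol n i = (if i = 0 then (if n = 5 then 3 else 5) else if i = 1 then 4 else if i = 2 then 5
     else if i = 3 then 1 else if i = 4 then 2 else 1 + (i + 1) mod 2)"
definition pcol :: "nat \<Rightarrow> nat \<Rightarrow> nat" where
  "pcol n i = (if i = 0 then (if n = 5 then 4 else 7 - acol n (n - 1)) else if i = 1 then 5
     else if i = 2 then 1 else if i = 3 then 2 else if i = 4 then (if n = 5 then 3 else 1) else 1)"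
definition c5 :: "nat \<Rightarrow> nat \<times> nat \<Rightarrow> nat" where
  "c5 n x = (if fst x = 0 then bcol n (snd x) else if fst x = 1 then acol n (snd x) else pcol n (snd x))"

lemma suc_mod_cases: assumes "i < n" shows "(i = n - 1 \<and> Suc i mod n = 0) \<or> (Suc i < n \<and> Suc i mod n = Suc i)"
proof (cases "Suc i < n")
  case False
  then have "Suc i = n" using \<open>i < n\<close> by simp
  then show ?thesis by auto
qed auto

lemma acol_ne: assumes "n \<ge> 5" "i < n" shows "acol n i \<noteq> acol n (Suc i mod n)"
  using suc_mod_cases[OF assms(2)]
proof
  assume h: "i = n - 1 \<and> Suc i mod n = 0"
  then show ?thesis using assms unfolding acol_def by auto
next
  assume h: "Suc i < n \<and> Suc i mod n = Suc i"
  have "(i + 1) mod 2 \<noteq> (Suc i + 1) mod 2" by presburger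
  then show ?thesis using h unfolding acol_def by auto
qed

lemma bcol_ne: assumes "n \<ge> 5" "i < n" shows "bcol n i \<noteq> bcol n (Suc i mod n)"
  using suc_mod_cases[OF assms(2)]
proof
  assume h: "i = n - 1 \<and> Suc i mod n = 0"
  have "1 + (i + 1) mod 2 \<le> 2" by presburger
  then show ?thesis using h assms unfolding bcol_def by auto
next
  assume h: "Suc i < n \<and> Suc i mod n = Suc i"
  have "(i + 1) mod 2 \<noteq> (Suc i + 1) mod 2" by presburger
  then show ?thesis using h unfolding bcol_def by auto
qed

lemma ab_ne: "acol n i \<noteq> bcol n i"
proof -
  have "(i + 1) mod 2 < 2" by simp
  then show ?thesis by (auto simp: acol_def bcol_def)
qed

lemma ap_ne: assumes "n \<ge> 5" shows "acol n i \<noteq> pcol n i"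
proof -
  have "(i + 1) mod 2 < 2" "n mod 2 < 2" by simp_all
  then show ?thesis using assms by (auto simp: acol_def pcol_def)
qed


lemma c5_range: assumes "n \<ge> 5" shows "c5 n x \<in> {1..5}"
proof -
  have "(snd x + 1) mod 2 < 2" "n mod 2 < 2" by simp_all
  moreover have "n > 5 \<Longrightarrow> acol n (n - 1) = 3 + n mod 2"
    unfolding acol_def using assms by auto
  ultimately show ?thesis using assms
    by (auto simp: c5_def acol_def bcol_def pcol_def)
qed

lemma c5_proper: assumes "n \<ge> 5" shows "proper_colouring (web_vertices n) (web_adj n) 5 (c5 n)"
  unfolding proper_colouring_def
proof (intro conjI ballI impI)
  fix x assume "x \<in> web_vertices n" then show "c5 n x \<in> {1..5}" using c5_range assms by blast
next
  fix x y assume xv: "x \<in> web_vertices n" and yv: "y \<in> web_vertices n" and e: "web_adj n x y"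
  obtain l i where x: "x = (l, i)" by (cases x)
  obtain l' j where y: "y = (l', j)" by (cases y)
  have i: "i < n" and j: "j < n" using xv yv x y by (auto simp: web_vertices_def)
  have l: "l \<le> 2" "l' \<le> 2" using xv yv x y by (auto simp: web_vertices_def)
  from e consider (c1) "l = l'" "l \<in> {0,1}" "j = Suc i mod n"
    | (c2) "l = l'" "l \<in> {0,1}" "i = Suc j mod n"
    | (v1) "i = j" "{l, l'} = {0,1}" | (v2) "i = j" "{l, l'} = {1,2}"
    unfolding web_adj_def x y by auto
  then show "c5 n x \<noteq> c5 n y"
  proof cases
    case c1 then show ?thesis using acol_ne[OF assms i] bcol_ne[OF assms i]
      by (auto simp: x y c5_def)
  next
    case c2 then show ?thesis using acol_ne[OF assms j] bcol_ne[OF assms j]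
      by (auto simp: x y c5_def)
  next
    case v1
    then have "(l = 0 \<and> l' = 1) \<or> (l = 1 \<and> l' = 0)" by (auto simp: doubleton_eq_iff)
    then show ?thesis using v1 ab_ne[of n i] by (auto simp: x y c5_def)
  next
    case v2
    then have "(l = 2 \<and> l' = 1) \<or> (l = 1 \<and> l' = 2)" by (auto simp: doubleton_eq_iff)
    then show ?thesis using v2 ap_ne[OF assms, of i] by (auto simp: x y c5_def)
  qed
qed


lemma adj_right: assumes "i < n" "l \<in> {0,1}" shows "web_adj n (l,i) (l, Suc i mod n)"
  using assms by (auto simp: web_adj_def web_vertices_def)

lemma left_mod: assumes "i < n" shows "i = Suc ((i + n - 1) mod n) mod n"
proof (cases i)
  case 0 then show ?thesis using assms by (simp add: Suc_diff_1)
next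
  case (Suc k)
  then have "(i + n - 1) mod n = k" using assms by simp
  then show ?thesis using Suc assms by simp
qed

lemma adj_left: assumes "i < n" "l \<in> {0,1}" shows "web_adj n (l,i) (l, (i + n - 1) mod n)"
  using assms left_mod[OF assms(1)] by (auto simp: web_adj_def web_vertices_def)

lemma adj_in: assumes "i < n" shows "web_adj n (1,i) (0,i)" "web_adj n (1,i) (2,i)"
  using assms by (auto simp: web_adj_def web_vertices_def)

lemma dom5: assumes "n \<ge> 5" "i < 5"
  shows "{1..5} - {c5 n (1,i)} \<subseteq> {c5 n (1,Suc i mod n), c5 n (1,(i+n-1) mod n), c5 n (0,i), c5 n (2,i)}"
proof (cases "n = 5")
  case True
  have "i = 0 \<or> i = 1 \<or> i = 2 \<or> i = 3 \<or> i = 4" using assms by auto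
  then show ?thesis using True by (auto simp: c5_def acol_def bcol_def pcol_def)
next
  case False
  then have n: "n > 5" using assms by simp
  have an: "acol n (n - 1) = 3 + n mod 2" using n by (simp add: acol_def)
  have m: "Suc n mod n = 1" "Suc (Suc n) mod n = 2" "Suc (Suc (Suc n)) mod n = 3"
     "(n - 1) mod n = n - 1" "Suc 0 mod n = 1" "Suc 1 mod n = 2" "Suc 2 mod n = 3" "Suc 3 mod n = 4" "Suc 4 mod n = 5"
    using n by (simp_all add: mod_Suc)
  have p: "n mod 2 = 0 \<or> n mod 2 = 1" by presburger
  have "i = 0 \<or> i = 1 \<or> i = 2 \<or> i = 3 \<or> i = 4" using assms by auto
  then show ?thesis
  proof (elim disjE)
    assume "i = 0" then show ?thesis using n an p m by (auto simp: c5_def acol_def bcol_def pcol_def)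
  next
    assume "i = 1" then show ?thesis using n m by (auto simp: c5_def acol_def bcol_def pcol_def)
  next
    assume "i = 2" then show ?thesis using n m by (auto simp: c5_def acol_def bcol_def pcol_def)
  next
    assume "i = 3" then show ?thesis using n m by (auto simp: c5_def acol_def bcol_def pcol_def)
  next
    assume "i = 4" then show ?thesis using n m by (auto simp: c5_def acol_def bcol_def pcol_def)
  qed
qed


lemma c5_b: assumes "n \<ge> 5" shows "b_colouring (web_vertices n) (web_adj n) 5 (c5 n)"
  unfolding b_colouring_def
proof (intro conjI c5_proper[OF assms] ballI)
  fix k :: nat assume k: "k \<in> {1..5}"
  define i where "i = k - 1"
  have i: "i < 5" "i < n" using k assms by (auto simp: i_def)
  have ck: "c5 n (1,i) = k" using k by (auto simp: c5_def acol_def i_def)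
  have n0: "n > 0" using assms by simp
  have V: "(1,i) \<in> web_vertices n" "(1, Suc i mod n) \<in> web_vertices n" "(1, (i+n-1) mod n) \<in> web_vertices n"
    "(0,i) \<in> web_vertices n" "(2,i) \<in> web_vertices n" using i n0 by (auto simp: web_vertices_def)
  show "\<exists>x\<in>web_vertices n. c5 n x = k \<and> (\<forall>j\<in>{1..5}. j \<noteq> k \<longrightarrow> (\<exists>y\<in>web_vertices n. web_adj n x y \<and> c5 n y = j))"
  proof (rule bexI[OF _ V(1)], rule conjI[OF ck], intro ballI impI)
    fix j :: nat assume "j \<in> {1..5}" "j \<noteq> k"
    then have "j \<in> {c5 n (1,Suc i mod n), c5 n (1,(i+n-1) mod n), c5 n (0,i), c5 n (2,i)}"
      using dom5[OF assms i(1)] ck by blast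
    then show "\<exists>y\<in>web_vertices n. web_adj n (1,i) y \<and> c5 n y = j"
      using V adj_right[OF i(2), of 1] adj_left[OF i(2), of 1] adj_in[OF i(2)] by blast
  qed
qed

definition c3 :: "nat \<times> nat \<Rightarrow> nat" where
  "c3 x = [[4,3,2],[1,2,3],[2,4,4::nat]] ! fst x ! snd x"

lemma V3: "web_vertices 3 = {(0,0),(0,1),(0,2),(1,0),(1,1),(1,2),(2,0),(2,1),(2,2)}"
  by (auto simp: web_vertices_def lessThan_def)

lemma c3_b: "b_colouring (web_vertices 3) (web_adj 3) 4 c3"
proof -
  have e: "{1..4::nat} = {1,2,3,4}" by auto
  show ?thesis
  unfolding b_colouring_def proper_colouring_def web_adj_def V3 e
  by (simp add: c3_def doubleton_eq_iff)
qed


definition c4 :: "nat \<times> nat \<Rightarrow> nat" where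
  "c4 x = [[2,1,4,3],[1,2,3,4],[3,4,1,2::nat]] ! fst x ! snd x"
lemma L4: "{..<4::nat} = {0,1,2,3}" by (simp add: lessThan_Suc numeral_eq_Suc insert_commute)
lemma V4: "web_vertices 4 = {(0,0),(0,1),(0,2),(0,3),(1,0),(1,1),(1,2),(1,3),(2,0),(2,1),(2,2),(2,3)}"
  unfolding web_vertices_def L4 by simp

definition Nb :: "nat \<Rightarrow> nat \<times> nat \<Rightarrow> (nat \<times> nat) set" where
  "Nb n x = (if fst x = 1 then {(1,Suc (snd x) mod n),(1,(snd x+n-1) mod n),(0,snd x),(2,snd x)}
     else if fst x = 0 then {(0,Suc (snd x) mod n),(0,(snd x+n-1) mod n),(1,snd x)} else {(1,snd x)})"

lemma inv_mod: assumes "j < n" "i = Suc j mod n" shows "j = (i + n - 1) mod n"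
proof (cases "Suc j < n")
  case True then show ?thesis using assms by simp
next
  case False then have "Suc j = n" using assms by simp
  then show ?thesis using assms by simp
qed

lemma nb: assumes "web_adj n x y" shows "y \<in> Nb n x"
proof -
  obtain l i where x: "x = (l, i)" by (cases x)
  obtain l' j where y: "y = (l', j)" by (cases y)
  have xv: "x \<in> web_vertices n" "y \<in> web_vertices n" using assms by (simp_all add: web_adj_def)
  have i: "i < n" and j: "j < n" using xv x y by (simp_all add: web_vertices_def)
  have e: "(l = l' \<and> l \<in> {0,1} \<and> (j = Suc i mod n \<or> i = Suc j mod n)) \<or> (i = j \<and> {l,l'} = {0,1}) \<or> (i = j \<and> {l,l'} = {1,2})"
    using assms unfolding web_adj_def x y by simp
  from e show ?thesis
  proof (elim disjE conjE)
    assume h: "l = l'" "l \<in> {0,1}" "j = Suc i mod n"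
    from h(2) have "l = 0 \<or> l = 1" by simp
    then show ?thesis unfolding x y h(1)[symmetric] h(3) by (auto simp: Nb_def)
  next
    assume h: "l = l'" "l \<in> {0,1}" "i = Suc j mod n"
    have jj: "j = (i + n - 1) mod n" using inv_mod[OF j h(3)] .
    from h(2) have "l = 0 \<or> l = 1" by simp
    then show ?thesis unfolding x y h(1)[symmetric] jj by (auto simp: Nb_def)
  next
    assume h: "i = j" "{l,l'} = {0,1}"
    then have "(l = 0 \<and> l' = 1) \<or> (l = 1 \<and> l' = 0)" by (simp add: doubleton_eq_iff)
    then show ?thesis unfolding x y h(1) by (auto simp: Nb_def)
  next
    assume h: "i = j" "{l,l'} = {1,2}"
    then have "(l = 2 \<and> l' = 1) \<or> (l = 1 \<and> l' = 2)" by (auto simp add: doubleton_eq_iff)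
    then show ?thesis unfolding x y h(1) by (auto simp: Nb_def)
  qed
qed
lemma c4_b: "b_colouring (web_vertices 4) (web_adj 4) 4 c4"
proof -
  have e: "{1..4::nat} = {1,2,3,4}" by auto
  show ?thesis
  unfolding b_colouring_def proper_colouring_def web_adj_def V4 e
  by (simp add: c4_def doubleton_eq_iff)
qed

lemma card_Nb: "card (Nb n x) \<le> (if fst x = 1 then 4 else 3)"
proof -
  have "card (set [a,b,c,d]) \<le> 4" "card (set [a,b,e]) \<le> 3" "card (set [f]) \<le> 3" for a b c d e f :: "nat \<times> nat"
    using card_length[of "[a,b,c,d]"] card_length[of "[a,b,e]"] card_length[of "[f]"] by auto
  then show ?thesis unfolding Nb_def by (auto simp del: card_insert_if)
qed

lemma dom_bound:
  assumes b: "b_colouring (web_vertices n) (web_adj n) k c" and i: "i \<in> {1..k}"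
  shows "\<exists>x\<in>web_vertices n. c x = i \<and> k - 1 \<le> (if fst x = 1 then 4 else 3)"
proof -
  from b i obtain x where x: "x \<in> web_vertices n" "c x = i"
    and d: "\<forall>j\<in>{1..k}. j \<noteq> i \<longrightarrow> (\<exists>y\<in>web_vertices n. web_adj n x y \<and> c y = j)"
    unfolding b_colouring_def by blast
  have "{1..k} - {i} \<subseteq> c ` Nb n x" using d nb by blast
  moreover have "finite (Nb n x)" by (simp add: Nb_def)
  ultimately have "card ({1..k} - {i}) \<le> card (Nb n x)"
    by (meson card_image_le card_mono finite_imageI order_trans)
  moreover have "card ({1..k} - {i}) = k - 1" using i by simp
  ultimately show ?thesis using x card_Nb[of n x] by auto
qed

lemma ub: assumes b: "b_colouring (web_vertices n) (web_adj n) k c"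
  shows "k \<le> 5" "k = 5 \<Longrightarrow> n \<ge> 5"
proof -
  show "k \<le> 5"
  proof (cases "k = 0")
    case False
    then have "1 \<in> {1..k}" by simp
    from dom_bound[OF b this] show ?thesis by (auto split: if_splits)
  qed simp
next
  assume k: "k = 5"
  have "\<forall>i\<in>{1..k}. \<exists>x. x \<in> web_vertices n \<and> c x = i \<and> fst x = 1"
  proof
    fix i assume "i \<in> {1..k}"
    from dom_bound[OF b this] k show "\<exists>x. x \<in> web_vertices n \<and> c x = i \<and> fst x = 1"
      by (auto split: if_splits)
  qed
  then obtain f where f: "\<forall>i\<in>{1..k}. f i \<in> web_vertices n \<and> c (f i) = i \<and> fst (f i) = 1"
    by metis
  have "inj_on (snd \<circ> f) {1..k}"
  proof (rule inj_onI)
    fix i j assume ij: "i \<in> {1..k}" "j \<in> {1..k}" "(snd \<circ> f) i = (snd \<circ> f) j"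
    then have "f i = f j" using f by (simp add: prod_eq_iff)
    then show "i = j" using f ij by metis
  qed
  moreover have "(snd \<circ> f) ` {1..k} \<subseteq> {..<n}" using f by (auto simp: web_vertices_def)
  ultimately have "card {1..k} \<le> card {..<n}" by (meson card_inj_on_le finite_lessThan)
  then show "n \<ge> 5" using k by simp
qed

theorem theorem2p19:
  fixes n :: nat
  assumes "n \<ge> 3"
  shows "b_chromatic_number (web_vertices n) (web_adj n) = (if n \<le> 4 then 4 else 5)"
  unfolding b_chromatic_number_def
proof (rule Greatest_equality)
  show "\<exists>c. b_colouring (web_vertices n) (web_adj n) (if n \<le> 4 then 4 else 5) c"
  proof (cases "n \<le> 4")
    case True
    then have "n = 3 \<or> n = 4" using assms by auto
    then show ?thesis using c3_b c4_b True by auto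
  next
    case False
    then show ?thesis using c5_b[of n] by auto
  qed
next
  fix k assume "\<exists>c. b_colouring (web_vertices n) (web_adj n) k c"
  then obtain c where b: "b_colouring (web_vertices n) (web_adj n) k c" by blast
  show "k \<le> (if n \<le> 4 then 4 else 5)"
  proof (cases "n \<le> 4")
    case True
    have "k \<le> 5" using ub(1)[OF b] .
    moreover have "k \<noteq> 5" using ub(2)[OF b] True by auto
    ultimately show ?thesis using True by simp
  next
    case False then show ?thesis using ub(1)[OF b] by simp
  qed
qed

end
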